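(* In the noisy search problem with $1/\delta=2^L$ using the $dyaPM$ strategy described in the context, for every level $l<L$ the nested log-likelihood $U^{\{l\}}(t)$ is a submartingale; more precisely, for all $t>0$, $$\mathbb{E}[U^{\{l\}}(t+1)\mid\pi(t)]-U^{\{l\}}(t)\ge K_d:=\min\Big\{\min_{\rho\in[0,1/4]}\max\{f(\rho),g(\rho)\},\ \min_{\rho\in[1/4,1/2]}f(\rho),\ \tfrac14 D\big(\tfrac14 B_1+\tfrac34 B_0\,\|\,B_0\big)\Big\}>0,$$ where $B_1=\mathrm{Bern}(1-p[1/2])$, $B_0=\mathrm{Bern}(p[1/2])$, $f(\rho)=\rho\,D\big(B_1\,\|\,\tfrac34B_1+\tfrac14B_0\big)$, and $g(\rho)=(\tfrac12-\rho)\,D\big((1-4\rho)B_1+4\rho B_0\,\|\,(\tfrac12+\rho)B_1+(\tfrac12-\rho)B_0\big)$.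
   Context: Search problem: fix $\delta\in(0,1)$ with $N=1/\delta=2^L$, $L$ an integer. A target index $\theta$ is uniform on $\{1,\dots,N\}$. A noise profile $p:(0,1)\to(0,1/2)$ is continuous and non-decreasing; $p[x]:=p(x)$. At each time $t$ a query set $S_t$ is chosen from the past and one observes $Y_t=\mathbb{1}(\theta\in S_t)\oplus Z_t$ with, conditionally on $S_t$, $Z_t\sim\mathrm{Bern}(p[\delta|S_t|])$ conditionally i.i.d. across time. Posterior $\pi_i(t)=\mathbb{P}(\theta=i\mid S_1^t,Y_1^t)$, $\pi_i(0)=\delta$; $\pi_S=\sum_{i\in S}\pi_i$, $\pi_{[a,b]}=\sum_{i=a}^b\pi_i$. $dyaPM$: $H_l^m=\{m2^{L-l}+1,\dots,(m+1)2^{L-l}\}$ for $l=0,\dots,L$, $m=0,\dots,2^l-1$. At time $t$, $l^*_t$ is the largest $l$ with $\max_m\pi_{H_l^m}(t)\ge\tfrac12$, $m^*_t=\arg\max_m\pi_{H^m_{l^*_t}}(t)$, $d=m^*_t2^{L-l^*_t}+1$, $k^*=\arg\min_k|\pi_{[d,k]}(t)-\tfrac12|$, and $S_{t+1}=\{d,\dots,k^*\}$. Nested log-likelihood: for $q=1,\dots,2^l$, $\mathrm{bin}(q)=\{(q-1)2^{L-l}+1,\dots,q2^{L-l}\}$, $\pi^{\{l\}}_q(t)=\sum_{i\in\mathrm{bin}(q)}\pi_i(t)$, $U^{\{l\}}(t)=\sum_{q=1}^{2^l}\pi^{\{l\}}_q(t)\log\frac{\pi^{\{l\}}_q(t)}{1-\pi^{\{l\}}_q(t)}$.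 $D(\cdot\|\cdot)$ is KL divergence; convex combinations of Bernoulli distributions denote mixtures. *)

theory Defs
  imports "HOL-Analysis.Analysis"
begin

text \<open>Noisy search with N = 1/delta = 2^L. Posteriors are functions nat => real,
  meaningful on the index set {1..N}.\<close>

definition Nsz :: "nat \<Rightarrow> nat" where
  "Nsz L = 2 ^ L"

definition piS :: "(nat \<Rightarrow> real) \<Rightarrow> nat set \<Rightarrow> real" where
  "piS \<pi> S = (\<Sum>i\<in>S. \<pi> i)"

definition H :: "nat \<Rightarrow> nat \<Rightarrow> nat \<Rightarrow> nat set" where
  "H L l m = {m * 2 ^ (L - l) + 1 .. (m + 1) * 2 ^ (L - l)}"

definition lstar :: "nat \<Rightarrow> (nat \<Rightarrow> real) \<Rightarrow> nat" where
  "lstar L \<pi> = (GREATEST l. l \<le> L \<and> (\<exists>m < 2 ^ l. piS \<pi> (H L l m) \<ge> 1/2))"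

text \<open>S is a query set that dyaPM may choose at posterior pi
  (any tie-breaking of the argmax / argmin is allowed).\<close>
definition dyaPM_query :: "nat \<Rightarrow> (nat \<Rightarrow> real) \<Rightarrow> nat set \<Rightarrow> bool" where
  "dyaPM_query L \<pi> S \<longleftrightarrow>
     (let l = lstar L \<pi> in
      \<exists>m k. m < 2 ^ l \<and> (\<forall>m' < 2 ^ l. piS \<pi> (H L l m') \<le> piS \<pi> (H L l m)) \<and>
        (let d = m * 2 ^ (L - l) + 1 in
          k \<in> {d .. Nsz L} \<and>
          (\<forall>k' \<in> {d .. Nsz L}. \<bar>piS \<pi> {d..k} - 1/2\<bar> \<le> \<bar>piS \<pi> {d..k'} - 1/2\<bar>) \<and>
          S = {d..k}))"

definition noise :: "(real \<Rightarrow> real) \<Rightarrow> nat \<Rightarrow> nat set \<Rightarrow> real" where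
  "noise p L S = p (real (card S) / 2 ^ L)"

text \<open>P(Y = y | theta = i, S), with Y = 1(theta in S) xor Z.\<close>
definition lik :: "(real \<Rightarrow> real) \<Rightarrow> nat \<Rightarrow> nat set \<Rightarrow> bool \<Rightarrow> nat \<Rightarrow> real" where
  "lik p L S y i = (if (i \<in> S) = y then 1 - noise p L S else noise p L S)"

definition obs_prob :: "(real \<Rightarrow> real) \<Rightarrow> nat \<Rightarrow> (nat \<Rightarrow> real) \<Rightarrow> nat set \<Rightarrow> bool \<Rightarrow> real" where
  "obs_prob p L \<pi> S y = (\<Sum>i\<in>{1..Nsz L}. \<pi> i * lik p L S y i)"

definition bayes_update :: "(real \<Rightarrow> real) \<Rightarrow> nat \<Rightarrow> (nat \<Rightarrow> real) \<Rightarrow> nat set \<Rightarrow> bool \<Rightarrow> nat \<Rightarrow> real" where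
  "bayes_update p L \<pi> S y i = \<pi> i * lik p L S y i / obs_prob p L \<pi> S y"

text \<open>reach p L t pi: pi is a possible posterior pi(t) under dyaPM
  (observations with positive probability).\<close>
inductive reach :: "(real \<Rightarrow> real) \<Rightarrow> nat \<Rightarrow> nat \<Rightarrow> (nat \<Rightarrow> real) \<Rightarrow> bool" for p L where
  init: "reach p L 0 (\<lambda>i. if i \<in> {1..Nsz L} then 1 / 2 ^ L else 0)"
| step: "reach p L t \<pi> \<Longrightarrow> dyaPM_query L \<pi> S \<Longrightarrow> obs_prob p L \<pi> S y > 0 \<Longrightarrow>
         reach p L (Suc t) (bayes_update p L \<pi> S y)"

definition bin :: "nat \<Rightarrow> nat \<Rightarrow> nat \<Rightarrow> nat set" where
  "bin L l q = {(q - 1) * 2 ^ (L - l) + 1 .. q * 2 ^ (L - l)}"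

definition Unest :: "nat \<Rightarrow> nat \<Rightarrow> (nat \<Rightarrow> real) \<Rightarrow> real" where
  "Unest L l \<pi> = (\<Sum>q\<in>{1..2 ^ l}. let b = piS \<pi> (bin L l q) in b * ln (b / (1 - b)))"

definition expU_next :: "(real \<Rightarrow> real) \<Rightarrow> nat \<Rightarrow> nat \<Rightarrow> (nat \<Rightarrow> real) \<Rightarrow> nat set \<Rightarrow> real" where
  "expU_next p L l \<pi> S =
     (\<Sum>y\<in>{True, False}. obs_prob p L \<pi> S y * Unest L l (bayes_update p L \<pi> S y))"

text \<open>KL divergence D(Bern a || Bern b) (natural log); a, b = probability of 1.\<close>
definition KLb :: "real \<Rightarrow> real \<Rightarrow> real" where
  "KLb a b = a * ln (a / b) + (1 - a) * ln ((1 - a) / (1 - b))"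

text \<open>B1 = Bern(1 - p[1/2]), B0 = Bern(p[1/2]); a mixture c B1 + (1-c) B0 is
  Bern(c (1 - p[1/2]) + (1 - c) p[1/2]).\<close>
definition mixB :: "(real \<Rightarrow> real) \<Rightarrow> real \<Rightarrow> real" where
  "mixB p c = c * (1 - p (1/2)) + (1 - c) * p (1/2)"

definition fK :: "(real \<Rightarrow> real) \<Rightarrow> real \<Rightarrow> real" where
  "fK p \<rho> = \<rho> * KLb (mixB p 1) (mixB p (3/4))"

definition gK :: "(real \<Rightarrow> real) \<Rightarrow> real \<Rightarrow> real" where
  "gK p \<rho> = (1/2 - \<rho>) * KLb (mixB p (1 - 4 * \<rho>)) (mixB p (1/2 + \<rho>))"

definition Kd :: "(real \<Rightarrow> real) \<Rightarrow> real" where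
  "Kd p = min (min (Inf ((\<lambda>\<rho>. max (fK p \<rho>) (gK p \<rho>)) ` {0..1/4}))
                   (Inf (fK p ` {1/4..1/2})))
              (1/4 * KLb (mixB p (1/4)) (mixB p 0))"

end

theory Submission
  imports Defs
begin


lemma logsum2:
  fixes a1 a2 b1 b2 :: real
  assumes "a1 > 0" "a2 > 0" "b1 > 0" "b2 > 0"
  shows "(a1+a2) * ln ((a1+a2)/(b1+b2)) \<le> a1 * ln (a1/b1) + a2 * ln (a2/b2)"
proof -
  define A where "A = a1+a2"
  define B where "B = b1+b2"
  have AB: "A > 0" "B > 0" using assms by (auto simp: A_def B_def)
  have h1: "ln ((b1*A)/(a1*B)) \<le> (b1*A)/(a1*B) - 1"
    by (rule ln_le_minus_one) (use assms AB in auto)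
  have h2: "ln ((b2*A)/(a2*B)) \<le> (b2*A)/(a2*B) - 1"
    by (rule ln_le_minus_one) (use assms AB in auto)
  have e1: "ln ((b1*A)/(a1*B)) = ln (A/B) - ln (a1/b1)"
    using assms AB by (simp add: ln_div ln_mult)
  have e2: "ln ((b2*A)/(a2*B)) = ln (A/B) - ln (a2/b2)"
    using assms AB by (simp add: ln_div ln_mult)
  have "a1 * ln ((b1*A)/(a1*B)) + a2 * ln ((b2*A)/(a2*B))
        \<le> a1 * ((b1*A)/(a1*B) - 1) + a2 * ((b2*A)/(a2*B) - 1)"
    using h1 h2 assms by (intro add_mono mult_left_mono) auto
  also have "\<dots> = (b1*A/B - a1) + (b2*A/B - a2)"
    using assms AB by (simp add: field_simps)
  also have "\<dots> = (b1+b2)*A/B - A" by (simp add: A_def add_divide_distrib distrib_right)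
  also have "\<dots> = 0" using AB by (simp add: B_def[symmetric])
  finally have "a1 * (ln (A/B) - ln (a1/b1)) + a2 * (ln (A/B) - ln (a2/b2)) \<le> 0"
    unfolding e1 e2 .
  thus ?thesis by (simp add: A_def B_def algebra_simps)
qed

lemma KLb_nonneg:
  fixes x y :: real
  assumes "0 < x" "x < 1" "0 < y" "y < 1"
  shows "KLb x y \<ge> 0"
  using logsum2[of x "1-x" y "1-y"] assms by (simp add: KLb_def)

lemma KLb_pos:
  fixes x y :: real
  assumes "0 < x" "x < 1" "0 < y" "y < 1" "x \<noteq> y"
  shows "KLb x y > 0"
proof -
  have h1: "ln (y/x) < y/x - 1"
  proof -
    have "ln (y/x) \<le> y/x - 1" using assms by (intro ln_le_minus_one) auto
    moreover have "y/x \<noteq> 1" using assms by auto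
    hence "ln (y/x) \<noteq> y/x - 1" using ln_eq_minus_one[of "y/x"] assms by auto
    ultimately show ?thesis by linarith
  qed
  have h2: "ln ((1-y)/(1-x)) \<le> (1-y)/(1-x) - 1"
    using assms by (intro ln_le_minus_one) auto
  have "x * ln (y/x) + (1-x) * ln ((1-y)/(1-x)) < x * (y/x - 1) + (1-x) * ((1-y)/(1-x) - 1)"
    using h1 h2 assms by (intro add_less_le_mono mult_left_mono mult_strict_left_mono) auto
  also have "\<dots> = 0" using assms by (simp add: field_simps)
  finally show ?thesis using assms by (simp add: KLb_def ln_div algebra_simps)
qed

lemma KLb_sym: "KLb (1-x) (1-y) = KLb x y"
  by (simp add: KLb_def algebra_simps)

lemma KLb_convex:
  fixes x1 x2 y1 y2 l :: real
  assumes "0 < x1" "x1 < 1" "0 < y1" "y1 < 1" "0 < x2" "x2 < 1" "0 < y2" "y2 < 1"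
    and "0 \<le> l" "l \<le> 1"
  shows "KLb (l*x1+(1-l)*x2) (l*y1+(1-l)*y2) \<le> l * KLb x1 y1 + (1-l) * KLb x2 y2"
proof (cases "l = 0 \<or> l = 1")
  case True thus ?thesis by auto
next
  case False
  hence l: "0 < l" "l < 1" using assms by auto
  have t1: "(l*x1+(1-l)*x2) * ln ((l*x1+(1-l)*x2)/(l*y1+(1-l)*y2))
      \<le> (l*x1) * ln ((l*x1)/(l*y1)) + ((1-l)*x2) * ln (((1-l)*x2)/((1-l)*y2))"
    by (rule logsum2) (use assms l in auto)
  have t2: "((l*(1-x1))+((1-l)*(1-x2))) * ln ((l*(1-x1)+(1-l)*(1-x2))/(l*(1-y1)+(1-l)*(1-y2)))
      \<le> (l*(1-x1)) * ln ((l*(1-x1))/(l*(1-y1))) + ((1-l)*(1-x2)) * ln (((1-l)*(1-x2))/((1-l)*(1-y2)))"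
    by (rule logsum2) (use assms l in auto)
  have r1: "(l*x1)/(l*y1) = x1/y1" "((1-l)*x2)/((1-l)*y2) = x2/y2"
     "(l*(1-x1))/(l*(1-y1)) = (1-x1)/(1-y1)" "((1-l)*(1-x2))/((1-l)*(1-y2)) = (1-x2)/(1-y2)"
    using l by auto
  have r2: "l*(1-x1)+(1-l)*(1-x2) = 1 - (l*x1+(1-l)*x2)" "l*(1-y1)+(1-l)*(1-y2) = 1 - (l*y1+(1-l)*y2)"
    by (auto simp: algebra_simps)
  show ?thesis using t1 t2 unfolding r1 r2 KLb_def by (simp add: algebra_simps)
qed



lemma KLb_self: "KLb x x = 0" by (simp add: KLb_def)

lemma KLb_mono1:
  fixes x x0 y :: real
  assumes "0 < y" "x < 1" "y \<le> x0" "x0 \<le> x"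
  shows "KLb x0 y \<le> KLb x y"
proof (cases "x = y")
  case True thus ?thesis using assms by auto
next
  case False
  hence xy: "y < x" using assms by auto
  define lam where "lam = (x0-y)/(x-y)"
  have l: "0 \<le> lam" "lam \<le> 1" using assms xy by (auto simp: lam_def field_simps)
  have xy': "x - y \<noteq> 0" using xy by simp
  have "lam*(x-y) = x0-y" using xy' by (simp add: lam_def)
  hence e: "x0 = lam*x + (1-lam)*y" by (simp add: algebra_simps)
  have e2: "y = lam*y + (1-lam)*y" by (simp add: algebra_simps)
  have "KLb x0 y = KLb (lam*x + (1-lam)*y) (lam*y + (1-lam)*y)" using e e2 by metis
  also have "\<dots> \<le> lam * KLb x y + (1-lam) * KLb y y"
    by (rule KLb_convex) (use assms xy l in auto)
  also have "\<dots> \<le> KLb x y" using l KLb_nonneg[of x y] assms xy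
    by (simp add: KLb_self mult_left_le_one_le)
  finally show ?thesis .
qed

lemma KLb_mono2:
  fixes x y y0 :: real
  assumes "0 < y" "x < 1" "y \<le> y0" "y0 \<le> x"
  shows "KLb x y0 \<le> KLb x y"
proof (cases "x = y")
  case True thus ?thesis using assms by auto
next
  case False
  hence xy: "y < x" using assms by auto
  define lam where "lam = (x-y0)/(x-y)"
  have l: "0 \<le> lam" "lam \<le> 1" using assms xy by (auto simp: lam_def field_simps)
  have xy': "x - y \<noteq> 0" using xy by simp
  have "lam*(x-y) = x-y0" using xy' by (simp add: lam_def)
  hence e: "y0 = lam*y + (1-lam)*x" by (simp add: algebra_simps)
  have e2: "x = lam*x + (1-lam)*x" by (simp add: algebra_simps)
  have "KLb x y0 = KLb (lam*x + (1-lam)*x) (lam*y + (1-lam)*x)" using e e2 by metis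
  also have "\<dots> \<le> lam * KLb x y + (1-lam) * KLb x x"
    by (rule KLb_convex) (use assms xy l in auto)
  also have "\<dots> \<le> KLb x y" using l KLb_nonneg[of x y] assms xy
    by (simp add: KLb_self mult_left_le_one_le)
  finally show ?thesis .
qed

lemma KLb_mono:
  fixes x x0 y y0 :: real
  assumes "0 < y" "x < 1" "y \<le> y0" "y0 \<le> x0" "x0 \<le> x"
  shows "KLb x0 y0 \<le> KLb x y"
  using KLb_mono2[of y x0 y0] KLb_mono1[of y x x0] assms by linarith

definition mixq :: "real \<Rightarrow> real \<Rightarrow> real" where
  "mixq q c = c * (1 - q) + (1 - c) * q"

lemma mixB_mixq: "mixB p c = mixq (p (1/2)) c"
  by (simp add: mixB_def mixq_def)

lemma mixq_bounds:
  assumes "0 < q" "q < 1/2" "0 \<le> c" "c \<le> 1"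
  shows "0 < mixq q c" "mixq q c < 1"
proof -
  have "mixq q c = q + c * (1 - 2*q)" by (simp add: mixq_def algebra_simps)
  moreover have "c * (1 - 2*q) \<le> 1 - 2*q" using assms by (simp add: mult_left_le_one_le)
  moreover have "c * (1 - 2*q) \<ge> 0" using assms by simp
  ultimately show "0 < mixq q c" "mixq q c < 1" using assms by linarith+
qed

lemma mixq_mono:
  assumes "q < 1/2" "c \<le> c'"
  shows "mixq q c \<le> mixq q c'"
proof -
  have "mixq q c' - mixq q c = (c' - c) * (1 - 2*q)" by (simp add: mixq_def algebra_simps)
  moreover have "(c' - c) * (1 - 2*q) \<ge> 0" using assms by simp
  ultimately show ?thesis by linarith
qed

lemma KLb_dp:
  fixes e x y :: real
  assumes "0 \<le> e" "e \<le> 1" "0 < x" "x < 1" "0 < y" "y < 1"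
  shows "KLb (e + (1-2*e)*x) (e + (1-2*e)*y) \<le> KLb x y"
proof -
  have "KLb (e + (1-2*e)*x) (e + (1-2*e)*y) = KLb ((1-e)*x + (1-(1-e))*(1-x)) ((1-e)*y + (1-(1-e))*(1-y))"
    by (simp add: algebra_simps)
  also have "\<dots> \<le> (1-e) * KLb x y + (1-(1-e)) * KLb (1-x) (1-y)"
    by (rule KLb_convex) (use assms in auto)
  also have "\<dots> = KLb x y" by (simp add: KLb_sym algebra_simps)
  finally show ?thesis .
qed

lemma mixq_dp:
  assumes "0 < q" "q \<le> q0" "q0 < 1/2" "0 \<le> r" "r \<le> 1" "0 \<le> r'" "r' \<le> 1"
  shows "KLb (mixq q0 r) (mixq q0 r') \<le> KLb (mixq q r) (mixq q r')"
proof -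
  define e where "e = (1 - (1-2*q0)/(1-2*q))/2"
  have q: "1 - 2*q > 0" using assms by simp
  have e1: "(1-2*e)*(1-2*q) = 1-2*q0" using q by (simp add: e_def field_simps)
  have e0: "0 \<le> e" "e \<le> 1" using assms q by (auto simp: e_def field_simps)
  have m: "mixq q0 c = e + (1-2*e) * mixq q c" for c
  proof -
    have a: "e + (1-2*e) * mixq q c = (e + (1-2*e)*q) + c * ((1-2*e)*(1-2*q))"
      by (simp add: mixq_def algebra_simps)
    have b: "e + (1-2*e)*q = q0"
    proof -
      have "1 - 2*q - 2*e + 4*e*q = 1 - 2*q0" using e1 by (simp add: algebra_simps)
      thus ?thesis by (simp add: algebra_simps)
    qed
    show ?thesis unfolding a b e1 by (simp add: mixq_def algebra_simps)
  qed
  show ?thesis unfolding m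
    by (rule KLb_dp) (use e0 mixq_bounds assms in auto)
qed

lemma KLb_cmp:
  assumes "0 < q" "q \<le> q0" "q0 < 1/2" "0 \<le> r'" "r' \<le> r1" "r1 \<le> r0" "r0 \<le> r" "r \<le> 1"
  shows "KLb (mixq q0 r0) (mixq q0 r1) \<le> KLb (mixq q r) (mixq q r')"
proof -
  have "KLb (mixq q0 r0) (mixq q0 r1) \<le> KLb (mixq q0 r) (mixq q0 r')"
    by (rule KLb_mono) (use assms mixq_bounds mixq_mono in auto)
  also have "\<dots> \<le> KLb (mixq q r) (mixq q r')"
    by (rule mixq_dp) (use assms in auto)
  finally show ?thesis .
qed



lemma mixq_inj:
  assumes "q < 1/2" "c \<noteq> c'"
  shows "mixq q c \<noteq> mixq q c'"
proof -
  have "mixq q c' - mixq q c = (c' - c) * (1 - 2*q)" by (simp add: mixq_def algebra_simps)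
  moreover have "(c' - c) * (1 - 2*q) \<noteq> 0" using assms by simp
  ultimately show ?thesis by auto
qed

lemma KLmix_nonneg:
  assumes "0 < q" "q < 1/2" "0 \<le> c" "c \<le> 1" "0 \<le> c'" "c' \<le> 1"
  shows "KLb (mixq q c) (mixq q c') \<ge> 0"
  using KLb_nonneg mixq_bounds assms by auto

lemma KLmix_pos:
  assumes "0 < q" "q < 1/2" "0 \<le> c" "c \<le> 1" "0 \<le> c'" "c' \<le> 1" "c \<noteq> c'"
  shows "KLb (mixq q c) (mixq q c') > 0"
  using KLb_pos mixq_bounds mixq_inj assms by auto

lemma fK_nonneg:
  assumes "0 < p (1/2)" "p (1/2) < 1/2" "0 \<le> \<rho>"
  shows "fK p \<rho> \<ge> 0"
  unfolding fK_def mixB_mixq using KLmix_nonneg[of "p (1/2)" 1 "3/4"] assms by simp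

lemma fK_mono:
  assumes "0 < p (1/2)" "p (1/2) < 1/2" "\<rho> \<le> \<rho>'"
  shows "fK p \<rho> \<le> fK p \<rho>'"
  unfolding fK_def mixB_mixq using KLmix_nonneg[of "p (1/2)" 1 "3/4"] assms
  by (intro mult_right_mono) auto

lemma gK_nonneg:
  assumes "0 < p (1/2)" "p (1/2) < 1/2" "0 \<le> \<rho>" "\<rho> \<le> 1/4"
  shows "gK p \<rho> \<ge> 0"
  unfolding gK_def mixB_mixq using KLmix_nonneg[of "p (1/2)" "1-4*\<rho>" "1/2+\<rho>"] assms by simp

lemma Kd_le_C1: "Kd p \<le> 1/4 * KLb (mixq (p (1/2)) (1/4)) (mixq (p (1/2)) 0)"
  unfolding Kd_def mixB_mixq by simp

lemma Kd_le_A: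
  assumes "0 < p (1/2)" "p (1/2) < 1/2" "0 \<le> \<rho>" "\<rho> \<le> 1/4"
  shows "Kd p \<le> max (fK p \<rho>) (gK p \<rho>)"
proof -
  have "Inf ((\<lambda>\<rho>. max (fK p \<rho>) (gK p \<rho>)) ` {0..1/4}) \<le> max (fK p \<rho>) (gK p \<rho>)"
  proof (rule cInf_lower)
    show "bdd_below ((\<lambda>\<rho>. max (fK p \<rho>) (gK p \<rho>)) ` {0..1/4})"
      by (rule bdd_belowI[where m=0]) (use fK_nonneg assms in force)
  qed (use assms in auto)
  thus ?thesis unfolding Kd_def by linarith
qed

lemma gK_tenth: "gK p (1/10) = 0"
  by (simp add: gK_def KLb_def)

lemma Kd_le_f:
  assumes "0 < p (1/2)" "p (1/2) < 1/2" "1/10 \<le> \<rho>"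
  shows "Kd p \<le> fK p \<rho>"
proof -
  have "Kd p \<le> max (fK p (1/10)) (gK p (1/10))" by (rule Kd_le_A) (use assms in auto)
  also have "\<dots> = fK p (1/10)" using gK_tenth fK_nonneg[of p "1/10"] assms by simp
  also have "\<dots> \<le> fK p \<rho>" using fK_mono assms by auto
  finally show ?thesis .
qed

lemma Kd_pos:
  assumes "0 < p (1/2)" "p (1/2) < 1/2"
  shows "Kd p > 0"
proof -
  let ?q = "p (1/2)"
  let ?h = "\<lambda>\<rho>. max (fK p \<rho>) (gK p \<rho>)"
  have cont: "continuous_on {0..1/4} ?h"
  proof -
    have c1: "continuous_on {0..1/4} (\<lambda>\<rho>. mixq ?q (1 - 4*\<rho>))"
      unfolding mixq_def by (intro continuous_intros)
    have c2: "continuous_on {0..1/4} (\<lambda>\<rho>. mixq ?q (1/2 + \<rho>))"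
      unfolding mixq_def by (intro continuous_intros)
    have b1: "0 < mixq ?q (1 - 4*\<rho>)" "mixq ?q (1 - 4*\<rho>) < 1" if "\<rho> \<in> {0..1/4}" for \<rho>
      using mixq_bounds[of ?q "1-4*\<rho>"] assms that by auto
    have b2: "0 < mixq ?q (1/2 + \<rho>)" "mixq ?q (1/2 + \<rho>) < 1" if "\<rho> \<in> {0..1/4}" for \<rho>
      using mixq_bounds[of ?q "1/2+\<rho>"] assms that by auto
    have "continuous_on {0..1/4} (\<lambda>\<rho>. KLb (mixq ?q (1 - 4*\<rho>)) (mixq ?q (1/2 + \<rho>)))"
      unfolding KLb_def
      by (intro continuous_intros c1 c2) (use b1 b2 in \<open>fastforce+\<close>)
    hence "continuous_on {0..1/4} (gK p)"
      unfolding gK_def mixB_mixq by (intro continuous_intros)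
    moreover have "continuous_on {0..1/4} (fK p)"
      unfolding fK_def by (intro continuous_intros)
    ultimately show ?thesis by (intro continuous_intros)
  qed
  obtain r0 where r0: "r0 \<in> {0..1/4}" "\<And>r. r \<in> {0..1/4} \<Longrightarrow> ?h r0 \<le> ?h r"
    using continuous_attains_inf[OF compact_Icc _ cont] by auto
  have hpos: "?h r0 > 0"
  proof (cases "r0 = 0")
    case True
    have "gK p 0 > 0" unfolding gK_def mixB_mixq
      using KLmix_pos[of ?q 1 "1/2"] assms by simp
    thus ?thesis using True by simp
  next
    case False
    hence "r0 > 0" using r0 by auto
    hence "fK p r0 > 0" unfolding fK_def mixB_mixq
      using KLmix_pos[of ?q 1 "3/4"] assms by simp
    thus ?thesis by simp
  qed
  have iA: "Inf (?h ` {0..1/4}) > 0"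
  proof -
    have "Inf (?h ` {0..1/4}) \<ge> ?h r0" by (rule cInf_greatest) (use r0 in auto)
    thus ?thesis using hpos by linarith
  qed
  have iB: "Inf (fK p ` {1/4..1/2}) > 0"
  proof -
    have "Inf (fK p ` {1/4..1/2}) \<ge> fK p (1/4)" by (rule cInf_greatest) (use fK_mono assms in auto)
    moreover have "fK p (1/4) > 0" unfolding fK_def mixB_mixq
      using KLmix_pos[of ?q 1 "3/4"] assms by simp
    ultimately show ?thesis by linarith
  qed
  have iC: "1/4 * KLb (mixB p (1/4)) (mixB p 0) > 0" unfolding mixB_mixq
    using KLmix_pos[of ?q "1/4" 0] assms by simp
  show ?thesis using iA iB iC unfolding Kd_def by simp
qed



definition phi :: "real \<Rightarrow> real" where "phi x = x * ln (x / (1 - x))"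

lemma phi_eq:
  assumes "0 < A" "A < P"
  shows "P * phi (A/P) = A * ln (A / (P - A))"
proof -
  have "(A/P) / (1 - A/P) = A / (P - A)" using assms by (simp add: field_simps)
  thus ?thesis unfolding phi_def using assms by simp
qed

lemma drift_alg:
  fixes q u b s :: real
  assumes q: "0 < q" "q < 1/2" and u: "0 \<le> u" "u \<le> b" and b: "0 < b" "b < 1"
    and s: "u \<le> s" "s - u \<le> 1 - b"
  shows "((1-q)* s + q*(1-s)) * phi (((1-q)*u + q*(b-u)) / ((1-q)* s + q*(1-s)))
       + (q* s + (1-q)*(1-s)) * phi ((q*u + (1-q)*(b-u)) / (q* s + (1-q)*(1-s))) - phi b
       = b * KLb (mixq q (u/b)) (mixq q ((s-u)/(1-b)))"
proof -
  define x where "x = mixq q (u/b)"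
  define y where "y = mixq q ((s-u)/(1-b))"
  have ub: "0 \<le> u/b" "u/b \<le> 1" using u b by auto
  have sb: "0 \<le> (s-u)/(1-b)" "(s-u)/(1-b) \<le> 1" using s b by auto
  have x: "0 < x" "x < 1" unfolding x_def using mixq_bounds[OF q ub] .
  have y: "0 < y" "y < 1" unfolding y_def using mixq_bounds[OF q sb] .
  have b': "1 - b \<noteq> 0" "b \<noteq> 0" using b by auto
  have bx: "b * x = u*(1-q) + (b-u)*q"
  proof -
    have "b * (u/b) = u" using b' by simp
    moreover have "b * mixq q c = (b*c)*(1-q) + (b - b*c)*q" for c by (simp add: mixq_def algebra_simps)
    ultimately show ?thesis unfolding x_def by simp
  qed
  have by': "(1-b) * y = (s-u)*(1-q) + ((1-b)-(s-u))*q"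
  proof -
    have "(1-b) * ((s-u)/(1-b)) = s-u" using b' by simp
    moreover have "(1-b) * mixq q c = ((1-b)*c)*(1-q) + ((1-b) - (1-b)*c)*q" for c by (simp add: mixq_def algebra_simps)
    ultimately show ?thesis unfolding y_def by simp
  qed
  have AT: "(1-q)*u + q*(b-u) = b * x" using bx by (simp add: algebra_simps)
  have AF: "q*u + (1-q)*(b-u) = b * (1-x)" using bx by (simp add: algebra_simps)
  have DT: "((1-q)* s + q*(1-s)) - b*x = (1-b) * y" using bx by' by (simp add: algebra_simps)
  have DF: "(q* s + (1-q)*(1-s)) - b*(1-x) = (1-b) * (1-y)" using bx by' by (simp add: algebra_simps)
  have pp: "(1-b)*y > 0" "(1-b)*(1-y) > 0" "b*x > 0" "b*(1-x) > 0" using b x y by auto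
  have p1: "0 < b*x" "b*x < (1-q)* s + q*(1-s)" using DT pp by linarith+
  have p2: "0 < b*(1-x)" "b*(1-x) < q* s + (1-q)*(1-s)" using DF pp by linarith+
  have l1: "ln ((b*x)/((1-b)*y)) = ln (b/(1-b)) + ln (x/y)"
    using b x y by (simp add: ln_div ln_mult)
  have l2: "ln ((b*(1-x))/((1-b)*(1-y))) = ln (b/(1-b)) + ln ((1-x)/(1-y))"
    using b x y by (simp add: ln_div ln_mult)
  have "((1-q)* s + q*(1-s)) * phi (((1-q)*u + q*(b-u)) / ((1-q)* s + q*(1-s)))
      = b*x * ln ((b*x)/((1-b)*y))"
    unfolding AT using phi_eq[OF p1] DT by simp
  moreover have "(q* s + (1-q)*(1-s)) * phi ((q*u + (1-q)*(b-u)) / (q* s + (1-q)*(1-s)))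
      = b*(1-x) * ln ((b*(1-x))/((1-b)*(1-y)))"
    unfolding AF using phi_eq[OF p2] DF by simp
  ultimately show ?thesis unfolding l1 l2 x_def[symmetric] y_def[symmetric]
    by (simp add: KLb_def phi_def algebra_simps)
qed



lemma sum_lik:
  assumes "finite T"
  shows "(\<Sum>i\<in>T. \<pi> i * lik p L S y i)
     = (if y then 1 - noise p L S else noise p L S) * piS \<pi> (T \<inter> S)
       + (if y then noise p L S else 1 - noise p L S) * piS \<pi> (T - S)"
proof -
  have "(\<Sum>i\<in>T. \<pi> i * lik p L S y i) = (\<Sum>i\<in>T \<inter> S. \<pi> i * lik p L S y i) + (\<Sum>i\<in>T - S. \<pi> i * lik p L S y i)"
    using sum.Int_Diff[OF assms] by blast
  also have "(\<Sum>i\<in>T \<inter> S. \<pi> i * lik p L S y i) = (\<Sum>i\<in>T \<inter> S. \<pi> i * (if y then 1 - noise p L S else noise p L S))"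
    by (rule sum.cong) (auto simp: lik_def)
  also have "(\<Sum>i\<in>T - S. \<pi> i * lik p L S y i) = (\<Sum>i\<in>T - S. \<pi> i * (if y then noise p L S else 1 - noise p L S))"
    by (rule sum.cong) (auto simp: lik_def)
  finally show ?thesis by (simp add: piS_def sum_distrib_right mult.commute)
qed

lemma piS_split:
  assumes "finite T"
  shows "piS \<pi> (T - S) = piS \<pi> T - piS \<pi> (T \<inter> S)"
  using sum.Int_Diff[OF assms, of \<pi> S] by (simp add: piS_def)

lemma piS_mono:
  assumes "finite B" "A \<subseteq> B" "\<forall>i\<in>B. \<pi> i \<ge> 0"
  shows "piS \<pi> A \<le> piS \<pi> B"
  unfolding piS_def using assms by (intro sum_mono2) auto

lemma piS_nonneg:
  assumes "\<forall>i\<in>A. \<pi> i \<ge> 0"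
  shows "piS \<pi> A \<ge> 0"
  unfolding piS_def using assms by (intro sum_nonneg) auto

lemma drift_bin:
  assumes pos: "\<forall>i\<in>{1..Nsz L}. \<pi> i > 0" and tot: "piS \<pi> {1..Nsz L} = 1"
    and S: "S \<subseteq> {1..Nsz L}" and q: "0 < noise p L S" "noise p L S < 1/2"
    and T: "T \<subseteq> {1..Nsz L}" and b: "0 < piS \<pi> T" "piS \<pi> T < 1"
  shows "(\<Sum>y\<in>{True,False}. obs_prob p L \<pi> S y * phi (piS (bayes_update p L \<pi> S y) T)) - phi (piS \<pi> T)
    = piS \<pi> T * KLb (mixq (noise p L S) (piS \<pi> (T \<inter> S) / piS \<pi> T))
                     (mixq (noise p L S) ((piS \<pi> S - piS \<pi> (T \<inter> S)) / (1 - piS \<pi> T)))"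
proof -
  define q where "q = noise p L S"
  define b where "b = piS \<pi> T"
  define u where "u = piS \<pi> (T \<inter> S)"
  define s where "s = piS \<pi> S"
  have fT: "finite T" using T finite_subset by blast
  have fN: "finite {1..Nsz L}" by simp
  have nn: "\<forall>i\<in>{1..Nsz L}. \<pi> i \<ge> 0" using pos by auto
  have u0: "0 \<le> u" unfolding u_def by (rule piS_nonneg) (use nn T in auto)
  have ub: "u \<le> b" unfolding u_def b_def by (rule piS_mono) (use nn T fT in auto)
  have fS: "finite S" using finite_subset[OF S fN] .
  have us: "u \<le> s" unfolding u_def s_def by (rule piS_mono) (use nn S fS in auto)
  have su: "s - u \<le> 1 - b"
  proof -
    have "piS \<pi> (S - T) \<le> piS \<pi> ({1..Nsz L} - T)" by (rule piS_mono) (use nn S in auto)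
    moreover have "piS \<pi> (S - T) = s - u" unfolding s_def u_def
      using piS_split[of S \<pi> T] S finite_subset[OF S fN] by (simp add: Int_commute)
    moreover have "piS \<pi> ({1..Nsz L} - T) = 1 - b" unfolding b_def
      using piS_split[OF fN, of \<pi> T] tot T by (simp add: Int_absorb1)
    ultimately show ?thesis by simp
  qed
  have PT: "obs_prob p L \<pi> S y = (if y then 1 - q else q) * s + (if y then q else 1 - q) * (1 - s)" for y
  proof -
    have "obs_prob p L \<pi> S y = (if y then 1 - q else q) * piS \<pi> ({1..Nsz L} \<inter> S)
       + (if y then q else 1 - q) * piS \<pi> ({1..Nsz L} - S)"
      unfolding obs_prob_def q_def by (rule sum_lik) simp
    moreover have "{1..Nsz L} \<inter> S = S" using S by auto
    moreover have "piS \<pi> ({1..Nsz L} - S) = 1 - s"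
      using piS_split[OF fN, of \<pi> S] tot S by (simp add: Int_absorb1 s_def)
    ultimately show ?thesis by (simp add: s_def)
  qed
  have AT: "piS (bayes_update p L \<pi> S y) T = ((if y then 1 - q else q) * u + (if y then q else 1 - q) * (b - u)) / obs_prob p L \<pi> S y" for y
  proof -
    have "piS (bayes_update p L \<pi> S y) T = (\<Sum>i\<in>T. \<pi> i * lik p L S y i) / obs_prob p L \<pi> S y"
      unfolding piS_def bayes_update_def by (simp add: sum_divide_distrib)
    also have "(\<Sum>i\<in>T. \<pi> i * lik p L S y i) = (if y then 1 - q else q) * u + (if y then q else 1 - q) * (b - u)"
      unfolding q_def u_def b_def using sum_lik[OF fT] piS_split[OF fT] by simp
    finally show ?thesis .
  qed
  have "(\<Sum>y\<in>{True,False}. obs_prob p L \<pi> S y * phi (piS (bayes_update p L \<pi> S y) T)) - phi b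
     = ((1-q)* s + q*(1-s)) * phi (((1-q)*u + q*(b-u)) / ((1-q)* s + q*(1-s)))
       + (q* s + (1-q)*(1-s)) * phi ((q*u + (1-q)*(b-u)) / (q* s + (1-q)*(1-s))) - phi b"
    by (simp add: PT AT)
  also have "\<dots> = b * KLb (mixq q (u/b)) (mixq q ((s-u)/(1-b)))"
    by (rule drift_alg) (use q b u0 ub us su in \<open>auto simp: q_def b_def\<close>)
  finally show ?thesis by (simp add: q_def b_def u_def s_def)
qed

lemma drift_total:
  "expU_next p L l \<pi> S - Unest L l \<pi>
   = (\<Sum>j\<in>{1..2^l}. (\<Sum>y\<in>{True,False}. obs_prob p L \<pi> S y * phi (piS (bayes_update p L \<pi> S y) (bin L l j)))
         - phi (piS \<pi> (bin L l j)))"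
proof -
  have "expU_next p L l \<pi> S = (\<Sum>j\<in>{1..2^l}. (\<Sum>y\<in>{True,False}. obs_prob p L \<pi> S y * phi (piS (bayes_update p L \<pi> S y) (bin L l j))))"
    unfolding expU_next_def Unest_def Let_def phi_def[symmetric]
    by (simp add: sum_distrib_left sum.distrib)
  moreover have "Unest L l \<pi> = (\<Sum>j\<in>{1..2^l}. phi (piS \<pi> (bin L l j)))"
    unfolding Unest_def Let_def phi_def by simp
  ultimately show ?thesis by (simp add: sum_subtractf)
qed



definition posinv :: "nat \<Rightarrow> (nat \<Rightarrow> real) \<Rightarrow> bool" where
  "posinv L \<pi> \<longleftrightarrow> (\<forall>i\<in>{1..Nsz L}. \<pi> i > 0) \<and> piS \<pi> {1..Nsz L} = 1"

lemma ivl_split: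
  fixes a b c :: nat
  assumes "a \<le> Suc b" "b \<le> c"
  shows "piS \<pi> {a..c} = piS \<pi> {a..b} + piS \<pi> {Suc b..c}"
proof -
  have "{a..c} = {a..b} \<union> {Suc b..c}" using assms by auto
  moreover have "{a..b} \<inter> {Suc b..c} = {}" by auto
  ultimately show ?thesis unfolding piS_def by (simp add: sum.union_disjoint)
qed

lemma ivl_pos:
  assumes "\<forall>i\<in>{1..N}. \<pi> i > 0" "1 \<le> a" "a \<le> b" "b \<le> N"
  shows "piS \<pi> {a..b} > 0"
  unfolding piS_def using assms by (intro sum_pos) auto

lemma ivl_strict:
  assumes "\<forall>i\<in>{1..N}. \<pi> i > 0" "1 \<le> d" "d \<le> Suc k" "k < k'" "k' \<le> N"
  shows "piS \<pi> {d..k} < piS \<pi> {d..k'}"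
  using ivl_split[of d k k' \<pi>] ivl_pos[of N \<pi> "Suc k" k'] assms by auto

lemma ivl_Suc:
  assumes "d \<le> Suc k"
  shows "piS \<pi> {d..Suc k} = piS \<pi> {d..k} + \<pi> (Suc k)"
  using assms unfolding piS_def by simp

lemma H_sub:
  assumes "l \<le> L" "m < 2^l"
  shows "H L l m \<subseteq> {1..Nsz L}"
proof -
  have "(m+1) * 2^(L-l) \<le> 2^l * 2^(L-l)" using assms by (intro mult_right_mono) auto
  also have "\<dots> = 2^L" using assms by (simp add: power_add[symmetric])
  finally show ?thesis unfolding H_def Nsz_def by auto
qed

lemma lstar_props:
  assumes inv: "posinv L \<pi>" and L: "1 \<le> L"
  shows "1 \<le> lstar L \<pi>" "lstar L \<pi> \<le> L"
    "\<exists>m<2^lstar L \<pi>. piS \<pi> (H L (lstar L \<pi>) m) \<ge> 1/2"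
    "\<And>l' m. lstar L \<pi> < l' \<Longrightarrow> l' \<le> L \<Longrightarrow> m < 2^l' \<Longrightarrow> piS \<pi> (H L l' m) < 1/2"
proof -
  define P where "P = (\<lambda>l. l \<le> L \<and> (\<exists>m < (2::nat) ^ l. piS \<pi> (H L l m) \<ge> 1/2))"
  have ls: "lstar L \<pi> = Greatest P" unfolding lstar_def P_def by simp
  have bnd: "\<And>y. P y \<Longrightarrow> y \<le> L" unfolding P_def by auto
  have P1: "P 1"
  proof -
    have e: "2 * 2^(L-1) = (2::nat)^L" using L by (cases L) auto
    have h0: "H L 1 0 = {1..2^(L-1)}" unfolding H_def by simp
    have h1': "H L 1 1 = {Suc (2^(L-1))..2*2^(L-1)}" unfolding H_def by simp
    have h1: "H L 1 1 = {Suc (2^(L-1))..2^L}" unfolding h1' e ..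
    have "piS \<pi> {1..2^L} = piS \<pi> {1..2^(L-1)} + piS \<pi> {Suc (2^(L-1))..2^L}"
      by (rule ivl_split) (use e in linarith)+
    moreover have "piS \<pi> {1..2^L} = 1" using inv by (simp add: posinv_def Nsz_def)
    ultimately have "piS \<pi> (H L 1 0) + piS \<pi> (H L 1 1) = 1" unfolding h0 h1 by simp
    hence "piS \<pi> (H L 1 0) \<ge> 1/2 \<or> piS \<pi> (H L 1 1) \<ge> 1/2" by linarith
    thus ?thesis unfolding P_def using L by (auto intro: exI[of _ 0] exI[of _ 1])
  qed
  show "1 \<le> lstar L \<pi>" unfolding ls by (rule Greatest_le_nat[of P 1 L, OF P1 bnd])
  have PG: "P (Greatest P)" by (rule GreatestI_nat[of P 1 L, OF P1 bnd])
  thus "lstar L \<pi> \<le> L" "\<exists>m<2^lstar L \<pi>. piS \<pi> (H L (lstar L \<pi>) m) \<ge> 1/2"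
    unfolding ls P_def by auto
  fix l' m :: nat assume a: "lstar L \<pi> < l'" "l' \<le> L" "m < 2^l'"
  have "\<not> P l'"
  proof
    assume "P l'"
    hence "l' \<le> Greatest P" by (rule Greatest_le_nat[of P l' L, OF _ bnd])
    thus False using a ls by simp
  qed
  thus "piS \<pi> (H L l' m) < 1/2" using a unfolding P_def by auto
qed



lemma opt_a:
  assumes pos: "\<forall>i\<in>{1..N}. \<pi> i > 0" and d1: "1 \<le> d" and dk: "d \<le> k" and kN: "k \<le> N"
    and opt: "\<forall>k'\<in>{d..N}. \<bar>piS \<pi> {d..k} - 1/2\<bar> \<le> \<bar>piS \<pi> {d..k'} - 1/2\<bar>"
    and e: "d \<le> e" "e \<le> N" "piS \<pi> {d..e} \<ge> 1/2"
  shows "k \<le> e"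
proof (rule ccontr)
  assume "\<not> k \<le> e"
  hence "piS \<pi> {d..e} < piS \<pi> {d..k}" using ivl_strict[OF pos d1, of e k] e kN by auto
  moreover have "\<bar>piS \<pi> {d..k} - 1/2\<bar> \<le> \<bar>piS \<pi> {d..e} - 1/2\<bar>" by (rule opt[rule_format]) (use e in auto)
  ultimately show False using e by linarith
qed

lemma opt_b:
  assumes pos: "\<forall>i\<in>{1..N}. \<pi> i > 0" and d1: "1 \<le> d" and dk: "d \<le> k" and kN: "k \<le> N"
    and opt: "\<forall>k'\<in>{d..N}. \<bar>piS \<pi> {d..k} - 1/2\<bar> \<le> \<bar>piS \<pi> {d..k'} - 1/2\<bar>"
    and tot: "piS \<pi> {d..N} \<ge> 1/2" and small: "\<forall>i\<in>{d..N}. \<pi> i < 1/2"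
  shows "piS \<pi> {d..k} > 1/4"
proof (cases "piS \<pi> {d..k} \<ge> 1/2")
  case True thus ?thesis by linarith
next
  case False
  hence "k \<noteq> N" using tot by auto
  hence kN': "Suc k \<le> N" using kN by auto
  have s1: "piS \<pi> {d..Suc k} = piS \<pi> {d..k} + \<pi> (Suc k)" using ivl_Suc dk by auto
  have p1: "\<pi> (Suc k) > 0" "\<pi> (Suc k) < 1/2" using pos small kN' d1 dk by auto
  have o1: "\<bar>piS \<pi> {d..k} - 1/2\<bar> \<le> \<bar>piS \<pi> {d..Suc k} - 1/2\<bar>" using opt kN' dk by auto
  show ?thesis using o1 s1 p1 False by (auto simp: abs_if split: if_splits)
qed

lemma opt_c:
  assumes pos: "\<forall>i\<in>{1..N}. \<pi> i > 0" and d1: "1 \<le> d" and dk: "d < k" and kN: "k \<le> N"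
    and opt: "\<forall>k'\<in>{d..N}. \<bar>piS \<pi> {d..k} - 1/2\<bar> \<le> \<bar>piS \<pi> {d..k'} - 1/2\<bar>"
    and small: "\<forall>i\<in>{d..N}. \<pi> i < 1/2"
  shows "piS \<pi> {d..k} < 3/4"
proof -
  obtain k0 where k0: "k = Suc k0" using dk by (cases k) auto
  have s1: "piS \<pi> {d..k} = piS \<pi> {d..k0} + \<pi> k" using ivl_Suc[of d k0 \<pi>] dk k0 by auto
  have p1: "\<pi> k > 0" "\<pi> k < 1/2" using pos small kN d1 dk by auto
  have o1: "\<bar>piS \<pi> {d..k} - 1/2\<bar> \<le> \<bar>piS \<pi> {d..k0} - 1/2\<bar>" using opt kN dk k0 by auto
  show ?thesis using o1 s1 p1 by (auto simp: abs_if split: if_splits)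
qed

lemma opt_d:
  assumes pos: "\<forall>i\<in>{1..N}. \<pi> i > 0" and d1: "1 \<le> d" and dk: "d \<le> k" and kN: "k \<le> N"
    and opt: "\<forall>k'\<in>{d..N}. \<bar>piS \<pi> {d..k} - 1/2\<bar> \<le> \<bar>piS \<pi> {d..k'} - 1/2\<bar>"
    and big: "\<pi> d \<ge> 1/2"
  shows "k = d"
proof (rule ccontr)
  assume "k \<noteq> d"
  hence "piS \<pi> {d..d} < piS \<pi> {d..k}" using ivl_strict[OF pos d1, of d k] dk kN by auto
  moreover have "\<bar>piS \<pi> {d..k} - 1/2\<bar> \<le> \<bar>piS \<pi> {d..d} - 1/2\<bar>" by (rule opt[rule_format]) (use dk kN in auto)
  moreover have "piS \<pi> {d..d} = \<pi> d" by (simp add: piS_def)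
  ultimately show False using big by linarith
qed

lemma opt_e:
  assumes pos: "\<forall>i\<in>{1..N}. \<pi> i > 0" and d1: "1 \<le> d" and dk: "d \<le> k" and kN: "k \<le> N"
    and opt: "\<forall>k'\<in>{d..N}. \<bar>piS \<pi> {d..k} - 1/2\<bar> \<le> \<bar>piS \<pi> {d..k'} - 1/2\<bar>"
    and e: "k < e" "e \<le> N"
  shows "piS \<pi> {d..e} \<ge> 1/2" "piS \<pi> {d..k} \<ge> 1 - piS \<pi> {d..e}"
proof -
  have lt: "piS \<pi> {d..k} < piS \<pi> {d..e}" using ivl_strict[OF pos d1, of k e] dk e by auto
  have o1: "\<bar>piS \<pi> {d..k} - 1/2\<bar> \<le> \<bar>piS \<pi> {d..e} - 1/2\<bar>" using opt dk e by auto
  show "piS \<pi> {d..e} \<ge> 1/2" using lt o1 by (auto simp: abs_if split: if_splits)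
  thus "piS \<pi> {d..k} \<ge> 1 - piS \<pi> {d..e}" using lt o1 by (auto simp: abs_if split: if_splits)
qed

lemma query_props:
  assumes inv: "posinv L \<pi>" and L: "1 \<le> L" and Q: "dyaPM_query L \<pi> S"
  obtains m k where "m < 2^(lstar L \<pi>)" "piS \<pi> (H L (lstar L \<pi>) m) \<ge> 1/2"
    "m * 2^(L - lstar L \<pi>) + 1 \<le> k" "k \<le> (m+1) * 2^(L - lstar L \<pi>)"
    "(m+1) * 2^(L - lstar L \<pi>) \<le> 2^L" "S = {m * 2^(L - lstar L \<pi>) + 1 .. k}"
    "\<forall>k'\<in>{m * 2^(L - lstar L \<pi>) + 1..2^L}. \<bar>piS \<pi> {m * 2^(L - lstar L \<pi>) + 1..k} - 1/2\<bar>
         \<le> \<bar>piS \<pi> {m * 2^(L - lstar L \<pi>) + 1..k'} - 1/2\<bar>"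
proof -
  define ls where "ls = lstar L \<pi>"
  define W where "W = (2::nat)^(L - ls)"
  have ls: "1 \<le> ls" "ls \<le> L" "\<exists>m<2^ls. piS \<pi> (H L ls m) \<ge> 1/2"
    using lstar_props[OF inv L] unfolding ls_def by auto
  obtain m k where m: "m < 2^ls" "\<forall>m' < 2^ls. piS \<pi> (H L ls m') \<le> piS \<pi> (H L ls m)"
    and k: "k \<in> {m*W+1 .. Nsz L}"
    and opt: "\<forall>k' \<in> {m*W+1 .. Nsz L}. \<bar>piS \<pi> {m*W+1..k} - 1/2\<bar> \<le> \<bar>piS \<pi> {m*W+1..k'} - 1/2\<bar>"
    and S: "S = {m*W+1..k}"
    using Q unfolding dyaPM_query_def Let_def ls_def[symmetric] W_def[symmetric] by blast
  have mh: "piS \<pi> (H L ls m) \<ge> 1/2" using ls(3) m(2) by force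
  have hE: "(m+1) * W \<le> 2^L"
  proof -
    have "(m+1) * W \<le> 2^ls * W" unfolding W_def using m by (intro mult_right_mono) auto
    also have "\<dots> = 2^L" unfolding W_def using ls by (simp add: power_add[symmetric])
    finally show ?thesis .
  qed
  have W1: "W \<ge> 1" unfolding W_def by simp
  have pos: "\<forall>i\<in>{1..2^L}. \<pi> i > 0" using inv unfolding posinv_def Nsz_def by auto
  have Heq: "H L ls m = {m*W+1..(m+1)*W}" unfolding H_def W_def by simp
  have kle: "k \<le> (m+1)*W"
    by (rule opt_a[OF pos _ _ _ opt[unfolded Nsz_def], of "(m+1)*W"])
       (use k hE mh Heq W1 in \<open>auto simp: Nsz_def algebra_simps\<close>)
  show ?thesis
    by (rule that[of m k]) (use m mh k kle hE S opt in \<open>auto simp: ls_def W_def Nsz_def\<close>)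
qed



lemma card_S:
  assumes inv: "posinv L \<pi>" and L: "1 \<le> L" and Q: "dyaPM_query L \<pi> S"
  shows "0 < card S" "card S \<le> 2^(L-1)" "S \<subseteq> {1..Nsz L}"
proof -
  obtain m k where mk: "m < 2^(lstar L \<pi>)" 
    "m * 2^(L - lstar L \<pi>) + 1 \<le> k" "k \<le> (m+1) * 2^(L - lstar L \<pi>)"
    "(m+1) * 2^(L - lstar L \<pi>) \<le> 2^L" "S = {m * 2^(L - lstar L \<pi>) + 1 .. k}"
    using query_props[OF inv L Q] by blast
  have ls: "1 \<le> lstar L \<pi>" "lstar L \<pi> \<le> L" using lstar_props[OF inv L] by auto
  have "card S = k - m * 2^(L - lstar L \<pi>)" using mk by simp
  also have "\<dots> \<le> 2^(L - lstar L \<pi>)" using mk by (simp add: algebra_simps)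
  also have "\<dots> \<le> 2^(L-1)" using ls by (intro power_increasing) auto
  finally show "card S \<le> 2^(L-1)" .
  show "0 < card S" using mk by simp
  show "S \<subseteq> {1..Nsz L}" using mk by (auto simp: Nsz_def)
qed

lemma noise_bounds:
  assumes inv: "posinv L \<pi>" and L: "1 \<le> L" and Q: "dyaPM_query L \<pi> S"
    and mono: "mono_on {0<..<1} p" and pb: "\<forall>x\<in>{0<..<1}. 0 < p x \<and> p x < 1/2"
  shows "0 < noise p L S" "noise p L S < 1/2" "noise p L S \<le> p (1/2)"
proof -
  have c: "0 < card S" "card S \<le> 2^(L-1)" using card_S[OF inv L Q] by auto
  have e: "(2::real)^L = 2 * 2^(L-1)" using L by (cases L) auto
  have x0: "0 < real (card S) / 2^L" using c by simp
  have "real (card S) \<le> 2^(L-1)" 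
  proof -
    have "real (card S) \<le> real (2^(L-1))" using c(2) by (simp only: of_nat_le_iff)
    thus ?thesis by simp
  qed
  hence x1: "real (card S) / 2^L \<le> 1/2" unfolding e by (simp add: field_simps)
  have x2: "real (card S) / 2^L < 1" using x1 by linarith
  have xin: "real (card S) / 2^L \<in> {0<..<1}" using x0 x2 by (simp only: greaterThanLessThan_iff) 
  show "0 < noise p L S" "noise p L S < 1/2" using pb xin unfolding noise_def by auto
  show "noise p L S \<le> p (1/2)" unfolding noise_def
    by (rule mono_onD[OF mono]) (use xin x1 in auto)
qed

lemma inv_step:
  assumes inv: "posinv L \<pi>" and L: "1 \<le> L" and Q: "dyaPM_query L \<pi> S"
    and mono: "mono_on {0<..<1} p" and pb: "\<forall>x\<in>{0<..<1}. 0 < p x \<and> p x < 1/2"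
  shows "posinv L (bayes_update p L \<pi> S y)"
proof -
  have q: "0 < noise p L S" "noise p L S < 1/2" using noise_bounds[OF inv L Q mono pb] by auto
  have lp: "lik p L S y i > 0" for i using q unfolding lik_def by auto
  have pos: "\<forall>i\<in>{1..Nsz L}. \<pi> i > 0" using inv unfolding posinv_def by auto
  have op: "obs_prob p L \<pi> S y > 0" unfolding obs_prob_def
    by (rule sum_pos) (use pos lp in \<open>auto simp: Nsz_def\<close>)
  have "\<forall>i\<in>{1..Nsz L}. bayes_update p L \<pi> S y i > 0"
    using pos lp op unfolding bayes_update_def by auto
  moreover have "piS (bayes_update p L \<pi> S y) {1..Nsz L} = 1"
    unfolding piS_def bayes_update_def using op
    by (simp add: sum_divide_distrib[symmetric] obs_prob_def)
  ultimately show ?thesis unfolding posinv_def by auto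
qed

lemma reach_inv:
  assumes "reach p L t \<pi>" and L: "1 \<le> L"
    and mono: "mono_on {0<..<1} p" and pb: "\<forall>x\<in>{0<..<1}. 0 < p x \<and> p x < 1/2"
  shows "posinv L \<pi>"
  using assms(1)
proof induction
  case init
  show ?case unfolding posinv_def piS_def Nsz_def by simp
next
  case (step t \<pi> S y)
  show ?case by (rule inv_step[OF step.IH L step.hyps(2) mono pb])
qed



lemma bin_eq: "bin L l j = {(j-1) * 2^(L-l) + 1 .. j * 2^(L-l)}"
  unfolding bin_def by simp

lemma bin_H: "1 \<le> j \<Longrightarrow> bin L l j = H L l (j-1)"
  unfolding bin_def H_def by simp

lemma bin_facts:
  assumes inv: "posinv L \<pi>" and l: "1 \<le> l" "l \<le> L" and j: "j \<in> {1..2^l}"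
  shows "bin L l j \<subseteq> {1..Nsz L}" "0 < piS \<pi> (bin L l j)" "piS \<pi> (bin L l j) < 1"
proof -
  define w where "w = (2::nat)^(L-l)"
  have e: "2^l * w = 2^L" unfolding w_def using l by (simp add: power_add[symmetric])
  have be: "bin L l j = {(j-1)*w+1 .. j*w}" unfolding bin_eq w_def ..
  have jw: "j * w \<le> 2^L" using j e by (metis atLeastAtMost_iff mult_le_mono1)
  have w1: "w \<ge> 1" unfolding w_def by simp
  show sub: "bin L l j \<subseteq> {1..Nsz L}" unfolding be Nsz_def using jw by auto
  have pos: "\<forall>i\<in>{1..Nsz L}. \<pi> i > 0" and tot: "piS \<pi> {1..Nsz L} = 1"
    using inv unfolding posinv_def by auto
  have jw2: "(j-1)*w + 1 \<le> j*w" using j w1 by (cases j) auto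
  show "0 < piS \<pi> (bin L l j)" unfolding be
    by (rule ivl_pos[OF pos]) (use j w1 jw jw2 in \<open>auto simp: Nsz_def\<close>)
  have "\<exists>x\<in>{1..Nsz L}. x \<notin> bin L l j"
  proof (cases "j = 1")
    case True
    have "w < 2^L"
    proof -
      have "(2::nat)^(L-l) < 2^L" using l by (intro power_strict_increasing) auto
      thus ?thesis unfolding w_def .
    qed
    thus ?thesis using True unfolding be Nsz_def by (intro bexI[of _ "2^L"]) auto
  next
    case False
    hence "j \<ge> 2" using j by auto
    hence "(j-1)*w + 1 > 1" using w1 by simp
    thus ?thesis unfolding be Nsz_def by (intro bexI[of _ 1]) auto
  qed
  then obtain x where x: "x \<in> {1..Nsz L}" "x \<notin> bin L l j" by blast
  have fN: "finite {1..Nsz L}" by simp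
  have "piS \<pi> (bin L l j) \<le> piS \<pi> ({1..Nsz L} - {x})"
    by (rule piS_mono) (use sub x pos in auto)
  also have "\<dots> = 1 - \<pi> x" using tot x unfolding piS_def by (simp add: sum_diff1)
  also have "\<dots> < 1" using pos x by auto
  finally show "piS \<pi> (bin L l j) < 1" .
qed

lemma frac_bounds:
  assumes inv: "posinv L \<pi>" and S: "S \<subseteq> {1..Nsz L}" and T: "T \<subseteq> {1..Nsz L}"
    and b: "0 < piS \<pi> T" "piS \<pi> T < 1"
  shows "0 \<le> piS \<pi> (T \<inter> S)" "piS \<pi> (T \<inter> S) \<le> piS \<pi> T" "piS \<pi> (T \<inter> S) \<le> piS \<pi> S"
    "piS \<pi> S - piS \<pi> (T \<inter> S) \<le> 1 - piS \<pi> T"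
proof -
  have pos: "\<forall>i\<in>{1..Nsz L}. \<pi> i > 0" and tot: "piS \<pi> {1..Nsz L} = 1"
    using inv unfolding posinv_def by auto
  have fN: "finite {1..Nsz L}" by simp
  have fT: "finite T" using T finite_subset by blast
  have fS: "finite S" using finite_subset[OF S fN] .
  have nn: "\<forall>i\<in>{1..Nsz L}. \<pi> i \<ge> 0" using pos by auto
  show "0 \<le> piS \<pi> (T \<inter> S)" by (rule piS_nonneg) (use nn T in auto)
  show "piS \<pi> (T \<inter> S) \<le> piS \<pi> T" by (rule piS_mono) (use nn T fT in auto)
  show "piS \<pi> (T \<inter> S) \<le> piS \<pi> S" by (rule piS_mono) (use nn S fS in auto)
  have "piS \<pi> (S - T) \<le> piS \<pi> ({1..Nsz L} - T)" by (rule piS_mono) (use nn S in auto)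
  moreover have "piS \<pi> (S - T) = piS \<pi> S - piS \<pi> (T \<inter> S)"
    using piS_split[of S \<pi> T] fS by (simp add: Int_commute)
  moreover have "piS \<pi> ({1..Nsz L} - T) = 1 - piS \<pi> T"
    using piS_split[OF fN, of \<pi> T] tot T by (simp add: Int_absorb1)
  ultimately show "piS \<pi> S - piS \<pi> (T \<inter> S) \<le> 1 - piS \<pi> T" by simp
qed

definition contr :: "(real \<Rightarrow> real) \<Rightarrow> nat \<Rightarrow> nat \<Rightarrow> (nat \<Rightarrow> real) \<Rightarrow> nat set \<Rightarrow> nat \<Rightarrow> real" where
  "contr p L l \<pi> S j = piS \<pi> (bin L l j) *
     KLb (mixq (noise p L S) (piS \<pi> (bin L l j \<inter> S) / piS \<pi> (bin L l j)))
         (mixq (noise p L S) ((piS \<pi> S - piS \<pi> (bin L l j \<inter> S)) / (1 - piS \<pi> (bin L l j))))"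

lemma drift_contr:
  assumes inv: "posinv L \<pi>" and l: "1 \<le> l" "l \<le> L" and S: "S \<subseteq> {1..Nsz L}"
    and q: "0 < noise p L S" "noise p L S < 1/2"
  shows "expU_next p L l \<pi> S - Unest L l \<pi> = (\<Sum>j\<in>{1..2^l}. contr p L l \<pi> S j)"
  unfolding drift_total contr_def
proof (rule sum.cong[OF refl])
  fix j assume j: "j \<in> {1..(2::nat)^l}"
  have pos: "\<forall>i\<in>{1..Nsz L}. \<pi> i > 0" and tot: "piS \<pi> {1..Nsz L} = 1"
    using inv unfolding posinv_def by auto
  show "(\<Sum>y\<in>{True, False}. obs_prob p L \<pi> S y * phi (piS (bayes_update p L \<pi> S y) (bin L l j))) -
          phi (piS \<pi> (bin L l j)) = piS \<pi> (bin L l j) *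
     KLb (mixq (noise p L S) (piS \<pi> (bin L l j \<inter> S) / piS \<pi> (bin L l j)))
         (mixq (noise p L S) ((piS \<pi> S - piS \<pi> (bin L l j \<inter> S)) / (1 - piS \<pi> (bin L l j))))"
    by (rule drift_bin[OF pos tot S q]) (use bin_facts[OF inv l j] in auto)
qed

lemma contr_nonneg:
  assumes inv: "posinv L \<pi>" and l: "1 \<le> l" "l \<le> L" and S: "S \<subseteq> {1..Nsz L}"
    and q: "0 < noise p L S" "noise p L S < 1/2" and j: "j \<in> {1..2^l}"
  shows "contr p L l \<pi> S j \<ge> 0"
proof -
  note bf = bin_facts[OF inv l j]
  note fb = frac_bounds[OF inv S bf(1) bf(2) bf(3)]
  have r: "0 \<le> piS \<pi> (bin L l j \<inter> S) / piS \<pi> (bin L l j)" "piS \<pi> (bin L l j \<inter> S) / piS \<pi> (bin L l j) \<le> 1"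
    using fb bf by (auto simp: field_simps)
  have r': "0 \<le> (piS \<pi> S - piS \<pi> (bin L l j \<inter> S)) / (1 - piS \<pi> (bin L l j))"
     "(piS \<pi> S - piS \<pi> (bin L l j \<inter> S)) / (1 - piS \<pi> (bin L l j)) \<le> 1"
    using fb bf by (auto simp: field_simps)
  show ?thesis unfolding contr_def using KLmix_nonneg[OF q r r'] bf by simp
qed



lemma SB:
  assumes inv: "posinv L \<pi>" and l: "1 \<le> l" "l \<le> L" and S: "S \<subseteq> {1..Nsz L}"
    and q: "0 < noise p L S" "noise p L S \<le> p (1/2)" "p (1/2) < 1/2" and j: "j \<in> {1..2^l}"
    and Sb: "S \<subseteq> bin L l j" and s: "piS \<pi> S > 1/4"
  shows "contr p L l \<pi> S j \<ge> 1/4 * KLb (mixq (p (1/2)) (1/4)) (mixq (p (1/2)) 0)"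
proof -
  note bf = bin_facts[OF inv l j]
  define b where "b = piS \<pi> (bin L l j)"
  define s' where "s' = piS \<pi> S"
  have iS: "bin L l j \<inter> S = S" using Sb by auto
  have pos: "\<forall>i\<in>{1..Nsz L}. \<pi> i > 0" using inv unfolding posinv_def by auto
  have nnb: "\<forall>i\<in>bin L l j. \<pi> i \<ge> 0" using bf(1) pos by force
  have fb: "finite (bin L l j)" by (simp add: bin_eq)
  have sb: "s' \<le> b" unfolding s'_def b_def by (rule piS_mono[OF fb Sb nnb])
  have b: "0 < b" "b < 1" using bf unfolding b_def by auto
  have r1: "s'/b \<le> 1" using sb b by simp
  have r0: "1/4 \<le> s'/b"
  proof -
    have "s' * b \<le> s'" using b s unfolding s'_def by (simp add: mult_left_le_one_le)
    hence "s' \<le> s'/b" using b by (simp add: field_simps)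
    thus ?thesis using s unfolding s'_def by linarith
  qed
  have KL: "KLb (mixq (p (1/2)) (1/4)) (mixq (p (1/2)) 0) \<le> KLb (mixq (noise p L S) (s'/b)) (mixq (noise p L S) 0)"
    by (rule KLb_cmp) (use q r0 r1 in auto)
  have K0: "KLb (mixq (p (1/2)) (1/4)) (mixq (p (1/2)) 0) \<ge> 0"
    by (rule KLmix_nonneg) (use q in auto)
  have "contr p L l \<pi> S j = b * KLb (mixq (noise p L S) (s'/b)) (mixq (noise p L S) 0)"
    unfolding contr_def iS b_def[symmetric] s'_def[symmetric] by simp
  moreover have "1/4 * KLb (mixq (p (1/2)) (1/4)) (mixq (p (1/2)) 0) \<le> b * KLb (mixq (noise p L S) (s'/b)) (mixq (noise p L S) 0)"
    by (rule mult_mono) (use KL K0 sb s b in \<open>auto simp: s'_def\<close>)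
  ultimately show ?thesis by simp
qed

lemma FB:
  assumes inv: "posinv L \<pi>" and l: "1 \<le> l" "l \<le> L" and S: "S \<subseteq> {1..Nsz L}"
    and q: "0 < noise p L S" "noise p L S \<le> p (1/2)" "p (1/2) < 1/2" and j: "j \<in> {1..2^l}"
    and bS: "bin L l j \<subseteq> S" and s: "piS \<pi> S \<le> 3/4"
  shows "contr p L l \<pi> S j \<ge> piS \<pi> (bin L l j) * KLb (mixq (p (1/2)) 1) (mixq (p (1/2)) (3/4))"
proof -
  note bf = bin_facts[OF inv l j]
  note fb = frac_bounds[OF inv S bf(1) bf(2) bf(3)]
  define b where "b = piS \<pi> (bin L l j)"
  define s' where "s' = piS \<pi> S"
  have iS: "bin L l j \<inter> S = bin L l j" using bS by auto
  have b: "0 < b" "b < 1" using bf unfolding b_def by auto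
  have r'0: "0 \<le> (s' - b)/(1-b)" using fb b unfolding iS b_def[symmetric] s'_def[symmetric] by simp
  have r'1: "(s' - b)/(1-b) \<le> 3/4"
  proof -
    have "s' - b \<le> 3/4 * (1-b)" using s b unfolding s'_def by simp
    thus ?thesis using b by (simp add: field_simps)
  qed
  have KL: "KLb (mixq (p (1/2)) 1) (mixq (p (1/2)) (3/4)) \<le> KLb (mixq (noise p L S) 1) (mixq (noise p L S) ((s' - b)/(1-b)))"
    by (rule KLb_cmp) (use q r'0 r'1 in auto)
  have "contr p L l \<pi> S j = b * KLb (mixq (noise p L S) 1) (mixq (noise p L S) ((s' - b)/(1-b)))"
    unfolding contr_def iS b_def[symmetric] s'_def[symmetric] using b by simp
  thus ?thesis using KL b unfolding b_def[symmetric] by (simp add: mult_left_mono)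
qed

lemma PB:
  assumes inv: "posinv L \<pi>" and l: "1 \<le> l" "l \<le> L" and S: "S \<subseteq> {1..Nsz L}"
    and q: "0 < noise p L S" "noise p L S \<le> p (1/2)" "p (1/2) < 1/2" and j: "j \<in> {1..2^l}"
    and F: "0 \<le> F" "F < 1/10"
    and bh: "piS \<pi> (bin L l j) \<le> 1/2" "piS \<pi> (bin L l j) \<ge> 1/2 - F"
    and u: "piS \<pi> (bin L l j \<inter> S) = piS \<pi> S - F"
    and s: "piS \<pi> S \<ge> 1 - F - piS \<pi> (bin L l j)"
  shows "contr p L l \<pi> S j \<ge> gK p F"
proof -
  note bf = bin_facts[OF inv l j]
  note fb = frac_bounds[OF inv S bf(1) bf(2) bf(3)]
  define b where "b = piS \<pi> (bin L l j)"
  define s' where "s' = piS \<pi> S"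
  have b: "0 < b" "b < 1" "b \<le> 1/2" "b \<ge> 1/2 - F" using bf bh unfolding b_def by auto
  have u': "piS \<pi> (bin L l j \<inter> S) = s' - F" using u unfolding s'_def .
  have ub: "s' - F \<le> b" using fb(2) u' unfolding b_def by simp
  have r1: "(s' - F)/b \<le> 1" using ub b by simp
  have r0: "1 - 4*F \<le> (s' - F)/b"
  proof -
    have "(1-4*F)*b \<le> 1 - 2*F - b"
    proof -
      have "(1 - 2*F) * (1 - 2*b) \<ge> 0" using b F by simp
      thus ?thesis by (simp add: algebra_simps)
    qed
    also have "\<dots> \<le> s' - F" using s unfolding s'_def b_def by simp
    finally show ?thesis using b by (simp add: field_simps)
  qed
  have r'e: "(s' - (s' - F))/(1-b) = F/(1-b)" by simp
  have r'0: "0 \<le> F/(1-b)" using F b by simp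
  have r'1: "F/(1-b) \<le> 2*F"
  proof -
    have "F*(2*b) \<le> F*1" by (rule mult_left_mono) (use b F in auto)
    hence "F \<le> 2*F*(1-b)" by (simp add: algebra_simps)
    thus ?thesis using b by (simp add: field_simps)
  qed
  have KL: "KLb (mixq (p (1/2)) (1-4*F)) (mixq (p (1/2)) (1/2+F)) \<le> KLb (mixq (noise p L S) ((s' - F)/b)) (mixq (noise p L S) (F/(1-b)))"
    by (rule KLb_cmp) (use q r0 r1 r'0 r'1 F in auto)
  have K0: "KLb (mixq (p (1/2)) (1-4*F)) (mixq (p (1/2)) (1/2+F)) \<ge> 0"
    by (rule KLmix_nonneg) (use q F in auto)
  have "contr p L l \<pi> S j = b * KLb (mixq (noise p L S) ((s' - F)/b)) (mixq (noise p L S) (F/(1-b)))"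
    unfolding contr_def u' b_def[symmetric] s'_def[symmetric] by simp
  moreover have "gK p F \<le> b * KLb (mixq (noise p L S) ((s' - F)/b)) (mixq (noise p L S) (F/(1-b)))"
    unfolding gK_def mixB_mixq by (rule mult_mono) (use KL K0 b F in auto)
  ultimately show ?thesis by simp
qed

lemma bins_sum:
  assumes "j1 \<le> Suc j2" "1 \<le> j1"
  shows "(\<Sum>j\<in>{j1..j2}. piS \<pi> (bin L l j)) = piS \<pi> {(j1-1) * 2^(L-l) + 1 .. j2 * 2^(L-l)}"
  using assms
proof (induction j2)
  case 0
  thus ?case by (simp add: piS_def)
next
  case (Suc j2)
  show ?case
  proof (cases "j1 = Suc (Suc j2)")
    case True thus ?thesis by (simp add: piS_def)
  next
    case False
    hence j: "j1 \<le> Suc j2" using Suc.prems by auto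
    have "(\<Sum>j\<in>{j1..Suc j2}. piS \<pi> (bin L l j)) = (\<Sum>j\<in>{j1..j2}. piS \<pi> (bin L l j)) + piS \<pi> (bin L l (Suc j2))"
      using j by simp
    also have "\<dots> = piS \<pi> {(j1-1) * 2^(L-l) + 1 .. j2 * 2^(L-l)} + piS \<pi> {Suc (j2 * 2^(L-l)) .. Suc j2 * 2^(L-l)}"
      using Suc.IH[OF j Suc.prems(2)] unfolding bin_eq by simp
    also have "\<dots> = piS \<pi> {(j1-1) * 2^(L-l) + 1 .. Suc j2 * 2^(L-l)}"
    proof (rule ivl_split[symmetric])
      show "(j1-1) * 2^(L-l) + 1 \<le> Suc (j2 * 2^(L-l))" using j by simp
      show "j2 * 2^(L-l) \<le> Suc j2 * 2^(L-l)" by simp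
    qed
    finally show ?thesis .
  qed
qed



lemma main_bound:
  assumes mono: "mono_on {0<..<1} p" and pb: "\<forall>x\<in>{0<..<1}. 0 < p x \<and> p x < 1/2"
    and l: "1 \<le> l" and lL: "l < L" and inv: "posinv L \<pi>" and Q: "dyaPM_query L \<pi> S"
  shows "expU_next p L l \<pi> S - Unest L l \<pi> \<ge> Kd p"
proof -
  have L: "1 \<le> L" using l lL by simp
  have l': "l \<le> L" using lL by simp
  have q0: "0 < p (1/2)" "p (1/2) < 1/2" using pb by auto
  note nb = noise_bounds[OF inv L Q mono pb]
  note cS = card_S[OF inv L Q]
  have q: "0 < noise p L S" "noise p L S \<le> p (1/2)" "p (1/2) < 1/2" using nb q0 by auto
  define D where "D = expU_next p L l \<pi> S - Unest L l \<pi>"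
  have D: "D = (\<Sum>j\<in>{1..2^l}. contr p L l \<pi> S j)"
    unfolding D_def by (rule drift_contr[OF inv l l' cS(3) nb(1) nb(2)])
  have cnn: "\<And>j. j \<in> {1..2^l} \<Longrightarrow> contr p L l \<pi> S j \<ge> 0"
    by (rule contr_nonneg[OF inv l l' cS(3) nb(1) nb(2)])
  have D1: "\<And>j. j \<in> {1..2^l} \<Longrightarrow> contr p L l \<pi> S j \<le> D"
    unfolding D by (rule member_le_sum) (use cnn in auto)
  have DA: "\<And>A. A \<subseteq> {1..2^l} \<Longrightarrow> (\<Sum>j\<in>A. contr p L l \<pi> S j) \<le> D"
    unfolding D by (rule sum_mono2) (use cnn in auto)
  define ls where "ls = lstar L \<pi>"
  define W where "W = (2::nat)^(L - ls)"
  define w where "w = (2::nat)^(L - l)"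
  obtain m k where mk: "m < 2^ls" "piS \<pi> (H L ls m) \<ge> 1/2"
    "m * W + 1 \<le> k" "k \<le> (m+1) * W" "(m+1) * W \<le> 2^L" "S = {m * W + 1 .. k}"
    and opt: "\<forall>k'\<in>{m * W + 1..2^L}. \<bar>piS \<pi> {m * W + 1..k} - 1/2\<bar> \<le> \<bar>piS \<pi> {m * W + 1..k'} - 1/2\<bar>"
    using query_props[OF inv L Q] unfolding ls_def[symmetric] W_def[symmetric] by blast
  define d where "d = m * W + 1"
  have d1: "1 \<le> d" unfolding d_def by simp
  have dk: "d \<le> k" using mk unfolding d_def by simp
  have W1: "W \<ge> 1" "w \<ge> 1" unfolding W_def w_def by simp_all
  have kN: "k \<le> 2^L" using mk by linarith
  have opt': "\<forall>k'\<in>{d..2^L}. \<bar>piS \<pi> {d..k} - 1/2\<bar> \<le> \<bar>piS \<pi> {d..k'} - 1/2\<bar>"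
    using opt unfolding d_def .
  have pos: "\<forall>i\<in>{1..2^L}. \<pi> i > 0" using inv unfolding posinv_def Nsz_def by auto
  have nn: "\<And>i. 1 \<le> i \<Longrightarrow> i \<le> 2^L \<Longrightarrow> 0 \<le> \<pi> i" using pos by (simp add: less_imp_le)
  have lsp: "1 \<le> ls" "ls \<le> L" using lstar_props[OF inv L] unfolding ls_def by auto
  have lsbig: "\<And>l' m'. ls < l' \<Longrightarrow> l' \<le> L \<Longrightarrow> m' < 2^l' \<Longrightarrow> piS \<pi> (H L l' m') < 1/2"
    using lstar_props(4)[OF inv L] unfolding ls_def by blast
  have sS: "piS \<pi> S = piS \<pi> {d..k}" using mk unfolding d_def by simp
  have Hd: "H L ls m = {d..(m+1)*W}" unfolding H_def d_def W_def by simp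
  have small: "\<forall>i\<in>{1..2^L}. \<pi> i < 1/2" if "ls < L"
  proof
    fix i :: nat assume i: "i \<in> {1..2^L}"
    have "H L L (i-1) = {i}" unfolding H_def using i by auto
    moreover have "piS \<pi> (H L L (i-1)) < 1/2" by (rule lsbig) (use that i in auto)
    ultimately show "\<pi> i < 1/2" by (simp add: piS_def)
  qed
  have bigd: "\<pi> d \<ge> 1/2" if "ls = L"
  proof -
    have "H L ls m = {d}" using that unfolding Hd W_def d_def by simp
    thus ?thesis using mk(2) by (simp add: piS_def)
  qed
  have s14: "piS \<pi> {d..k} > 1/4"
  proof (cases "ls = L")
    case True
    have "k = d" by (rule opt_d[OF pos d1 dk kN opt' bigd[OF True]])
    thus ?thesis using bigd[OF True] by (simp add: piS_def)
  next
    case False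
    hence lsL: "ls < L" using lsp by simp
    have "piS \<pi> {d..2^L} \<ge> piS \<pi> (H L ls m)"
    proof (rule piS_mono)
      show "\<forall>i\<in>{d..2^L}. 0 \<le> \<pi> i"
      proof
        fix i assume "i \<in> {d..(2::nat)^L}"
        hence "i \<in> {1..2^L}" using d1 by auto
        thus "0 \<le> \<pi> i" using pos by (simp add: less_imp_le)
      qed
    qed (use Hd mk in auto)
    hence tot: "piS \<pi> {d..2^L} \<ge> 1/2" using mk by linarith
    show ?thesis by (rule opt_b[OF pos d1 dk kN opt' tot]) (use small[OF lsL] d1 in auto)
  qed
  have C1: "Kd p \<le> 1/4 * KLb (mixq (p (1/2)) (1/4)) (mixq (p (1/2)) 0)" by (rule Kd_le_C1)
  show ?thesis
  proof (cases "l \<le> ls")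
    case True
    define c where "c = (2::nat)^(ls-l)"
    have c1: "c \<ge> 1" unfolding c_def by simp
    have wW: "w = W * c" unfolding w_def W_def c_def using True lsp by (simp add: power_add[symmetric])
    have lc: "2^ls = 2^l * c" unfolding c_def using True by (simp add: power_add[symmetric])
    define j where "j = m div c + 1"
    have jr: "j \<in> {1..2^l}"
    proof -
      have "m div c < 2^l" using mk(1) lc by (simp add: less_mult_imp_div_less)
      thus ?thesis unfolding j_def by simp
    qed
    have Sb: "S \<subseteq> bin L l j"
    proof -
      have a: "(m div c) * w \<le> m * W"
      proof -
        have "(m div c) * c \<le> m" by simp
        hence "(m div c) * c * W \<le> m * W" by (rule mult_right_mono) simp
        thus ?thesis unfolding wW by (simp add: algebra_simps)
      qed
      have b: "(m+1) * W \<le> (m div c + 1) * w"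
      proof -
        have "m < (m div c + 1) * c"
        proof -
          have e: "m div c * c + m mod c = m" by (rule div_mult_mod_eq)
          have "m mod c < c" using c1 by simp
          moreover have "(m div c + 1) * c = m div c * c + c" by (simp add: algebra_simps)
          ultimately show ?thesis using e by linarith
        qed
        hence "m + 1 \<le> (m div c + 1) * c" by simp
        hence "(m+1) * W \<le> (m div c + 1) * c * W" by (rule mult_right_mono) simp
        thus ?thesis unfolding wW by (simp add: algebra_simps)
      qed
      show ?thesis unfolding bin_eq mk(6) j_def w_def[symmetric] using a b mk by auto
    qed
    have "contr p L l \<pi> S j \<ge> 1/4 * KLb (mixq (p (1/2)) (1/4)) (mixq (p (1/2)) 0)"
      by (rule SB[OF inv l l' cS(3) q jr Sb]) (use s14 sS in simp)
    thus ?thesis using D1[OF jr] C1 unfolding D_def by linarith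
  next
    case False
    hence lls: "ls < l" by simp
    define c where "c = (2::nat)^(l-ls)"
    have c1: "c \<ge> 1" unfolding c_def by simp
    have Ww: "W = w * c" unfolding w_def W_def c_def using lls lL by (simp add: power_add[symmetric])
    have lc: "2^l = 2^ls * c" unfolding c_def using lls by (simp add: power_add[symmetric])
    have Lw: "2^L = 2^l * w" unfolding w_def using l' by (simp add: power_add[symmetric])
    define j1 where "j1 = m * c + 1"
    have j1r: "j1 \<in> {1..2^l}"
    proof -
      have "(m+1) * c \<le> 2^ls * c" using mk(1) by (intro mult_right_mono) auto
      hence "m * c + c \<le> 2^l" unfolding lc by (simp add: algebra_simps)
      thus ?thesis unfolding j1_def using c1 by simp
    qed
    have dj1: "d = (j1 - 1) * w + 1" unfolding d_def j1_def Ww by (simp add: algebra_simps)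
    show ?thesis
    proof (cases "k \<le> j1 * w")
      case True
      have Sb: "S \<subseteq> bin L l j1" unfolding bin_eq mk(6) w_def[symmetric] d_def[symmetric]
        using True dj1 by auto
      have "contr p L l \<pi> S j1 \<ge> 1/4 * KLb (mixq (p (1/2)) (1/4)) (mixq (p (1/2)) 0)"
        by (rule SB[OF inv l l' cS(3) q j1r Sb]) (use s14 sS in simp)
      thus ?thesis using D1[OF j1r] C1 unfolding D_def by linarith
    next
      case False
      hence kj1: "j1 * w < k" by simp
      have j1w: "(j1 - 1) * w + w = j1 * w" using j1r by (cases j1) auto
      have dlk: "d < k" using kj1 W1 dj1 j1w by linarith
      have lsL: "ls < L"
      proof (rule ccontr)
        assume "\<not> ls < L"
        hence "ls = L" using lsp by simp
        hence "k = d" by (intro opt_d[OF pos d1 dk kN opt' bigd])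
        thus False using dlk by simp
      qed
      have s34: "piS \<pi> {d..k} < 3/4"
        by (rule opt_c[OF pos d1 dlk kN opt']) (use small[OF lsL] d1 in auto)
      define j2 where "j2 = k div w"
      define e where "e = j2 * w"
      have ek: "e \<le> k" unfolding e_def j2_def by simp
      have j12: "j1 \<le> j2" unfolding j2_def using kj1 W1
        by (simp add: less_eq_div_iff_mult_less_eq)
      have j2l: "j2 \<le> 2^l"
      proof -
        have "k div w \<le> (2^l * w) div w" by (rule div_le_mono) (use kN Lw in simp)
        thus ?thesis unfolding j2_def using W1 by simp
      qed
      define F where "F = piS \<pi> {d..e}"
      have Fsum: "(\<Sum>j\<in>{j1..j2}. piS \<pi> (bin L l j)) = F"
        unfolding F_def dj1 e_def w_def by (rule bins_sum) (use j12 j1r in auto)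
      have F0: "F \<ge> 0" unfolding F_def by (rule piS_nonneg) (use ek kN d1 in \<open>auto intro!: nn\<close>)
      have full: "\<And>j. j \<in> {j1..j2} \<Longrightarrow> j \<in> {1..2^l} \<and> bin L l j \<subseteq> S"
      proof -
        fix j assume j: "j \<in> {j1..j2}"
        have a: "(j1 - 1) * w \<le> (j - 1) * w" using j by (intro mult_right_mono) auto
        have b: "j * w \<le> e" unfolding e_def using j by (intro mult_right_mono) auto
        show "j \<in> {1..2^l} \<and> bin L l j \<subseteq> S"
          unfolding bin_eq mk(6) w_def[symmetric] d_def[symmetric]
          using j j1r j2l a b ek dj1 by auto
      qed
      define K where "K = KLb (mixq (p (1/2)) 1) (mixq (p (1/2)) (3/4))"
      have DF: "fK p F \<le> D"
      proof -
        have "fK p F = (\<Sum>j\<in>{j1..j2}. piS \<pi> (bin L l j)) * K"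
          unfolding fK_def mixB_mixq Fsum K_def by simp
        also have "\<dots> = (\<Sum>j\<in>{j1..j2}. piS \<pi> (bin L l j) * K)" by (simp add: sum_distrib_right)
        also have "\<dots> \<le> (\<Sum>j\<in>{j1..j2}. contr p L l \<pi> S j)"
        proof (rule sum_mono)
          fix j assume j: "j \<in> {j1..j2}"
          show "piS \<pi> (bin L l j) * K \<le> contr p L l \<pi> S j"
            unfolding K_def by (rule FB[OF inv l l' cS(3) q]) (use full[OF j] s34 sS in auto)
        qed
        also have "\<dots> \<le> D" by (rule DA) (use full in auto)
        finally show ?thesis .
      qed
      show ?thesis
      proof (cases "F \<ge> 1/10")
        case True
        thus ?thesis using Kd_le_f[of p F, OF q0 True] DF unfolding D_def by linarith
      next
        case False
        hence F10: "F < 1/10" by simp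
        have ek': "e < k"
        proof (rule ccontr)
          assume "\<not> e < k"
          hence "e = k" using ek by simp
          thus False using s14 F10 unfolding F_def by simp
        qed
        have kew: "k < e + w"
        proof -
          have e: "k div w * w + k mod w = k" by (rule div_mult_mod_eq)
          moreover have "k mod w < w" using W1 by simp
          ultimately show ?thesis unfolding e_def j2_def by linarith
        qed
        have j2l': "j2 < 2^l"
        proof (rule ccontr)
          assume "\<not> j2 < 2^l"
          hence "j2 = 2^l" using j2l by simp
          hence "e = 2^L" unfolding e_def Lw by simp
          thus False using ek' kN by simp
        qed
        define jP where "jP = Suc j2"
        have jPr: "jP \<in> {1..2^l}" unfolding jP_def using j2l' by simp
        have binP: "bin L l jP = {Suc e..e+w}" unfolding bin_eq jP_def w_def[symmetric] e_def by simp
        have bP: "piS \<pi> (bin L l jP) < 1/2"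
          unfolding bin_H[of jP, unfolded jP_def, simplified] jP_def
          by (rule lsbig) (use lls l' j2l' in auto)
        have ewN: "e + w \<le> 2^L"
        proof -
          have "(j2 + 1) * w \<le> 2^l * w" using j2l' by (intro mult_right_mono) auto
          thus ?thesis unfolding e_def Lw by (simp add: algebra_simps)
        qed
        have oe: "piS \<pi> {d..e+w} \<ge> 1/2" "piS \<pi> {d..k} \<ge> 1 - piS \<pi> {d..e+w}"
          using opt_e[OF pos d1 dk kN opt' kew ewN] by auto
        have de: "d \<le> Suc e" using ek' dk dj1 j12 unfolding e_def
          by (metis Suc_eq_plus1 add_le_mono1 diff_le_self dj1 e_def j12 le_trans mult_le_mono1)
        have sp1: "piS \<pi> {d..e+w} = F + piS \<pi> (bin L l jP)"
          unfolding F_def binP by (rule ivl_split) (use de in auto)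
        have sp2: "piS \<pi> {d..k} = F + piS \<pi> {Suc e..k}"
          unfolding F_def by (rule ivl_split) (use de ek in auto)
        have iS: "bin L l jP \<inter> S = {Suc e..k}" unfolding binP mk(6) d_def[symmetric]
          using de kew by auto
        have "contr p L l \<pi> S jP \<ge> gK p F"
        proof (rule PB[OF inv l l' cS(3) q jPr F0 F10])
          show "piS \<pi> (bin L l jP) \<le> 1/2" using bP by simp
          show "piS \<pi> (bin L l jP) \<ge> 1/2 - F" using oe sp1 by simp
          show "piS \<pi> (bin L l jP \<inter> S) = piS \<pi> S - F" unfolding iS sS using sp2 by simp
          show "piS \<pi> S \<ge> 1 - F - piS \<pi> (bin L l jP)" unfolding sS using oe sp1 by simp
        qed
        hence DG: "gK p F \<le> D" using D1[OF jPr] by linarith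
        have "Kd p \<le> max (fK p F) (gK p F)" by (rule Kd_le_A[of p F, OF q0 F0]) (use F10 in simp)
        thus ?thesis using DF DG unfolding D_def by simp
      qed
    qed
  qed
qed


theorem lemma9:
  fixes p :: "real \<Rightarrow> real" and L l t :: nat and \<pi> :: "nat \<Rightarrow> real" and S :: "nat set"
  assumes "continuous_on {0<..<1} p"
    and "mono_on {0<..<1} p"
    and "\<forall>x\<in>{0<..<1}. 0 < p x \<and> p x < 1/2"
    and "1 \<le> l" and "l < L"
    and "0 < t" and "reach p L t \<pi>"
    and "dyaPM_query L \<pi> S"
  shows "expU_next p L l \<pi> S - Unest L l \<pi> \<ge> Kd p \<and> Kd p > 0"
proof -
  have L: "1 \<le> L" using assms(4,5) by simp
  have inv: "posinv L \<pi>" by (rule reach_inv[OF assms(7) L assms(2) assms(3)])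
  have q0: "0 < p (1/2)" "p (1/2) < 1/2" using assms(3) by auto
  show ?thesis
    using main_bound[OF assms(2) assms(3) assms(4) assms(5) inv assms(8)] Kd_pos[of p, OF q0] by simp
qed

end
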